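(* Let $(A,\gamma)$ be a divided power algebra over a field $\mathbb F$. For ${\underline r}\in\mathrm{Comp}_p(n)$ and $h\in\mathscr C_{\underline r}$ set $\phi_{h,{\underline r}}(a_1,\dots,a_p)=\prod_{i=1}^p\gamma_{r_i}(a_i)$, the product taken in the commutative algebra $A$ and factors with $r_i=0$ omitted. Then $(A,\phi)$ is a step algebra (i.e. a $\Gamma(Lev)$-algebra, induced via the operad morphism $Lev\to Com$).
   Context: A divided power algebra is an associative commutative $\mathbb F$-algebra $A$ with maps $\gamma_n:A\to A$, $n\in\mathbb N$, such that (C1) $\gamma_n(\lambda a)=\lambda^n\gamma_n(a)$; (C2) $\gamma_m(a)\gamma_n(a)=\binom{m+n}{m}\gamma_{m+n}(a)$; (C3) $\gamma_n(a+b)=\gamma_n(a)+\sum_{l=1}^{n-1}\gamma_l(a)\gamma_{n-l}(b)+\gamma_n(b)$; (C4) $\gamma_1(a)=a$; (C5) $\gamma_n(ab)=n!\gamma_n(a)\gamma_n(b)=a^n\gamma_n(b)=\gamma_n(a)b^n$; (C6) $\gamma_m(\gamma_n(a))=\frac{(mn)!}{m!(n!)^m}\gamma_{mn}(a)$. $[n]=\{1,\dots,n\}$. $\mathscr L'(n)$ ($n\ge1$): maps $h:[n]\to\mathbb N$ with $\sum_i2^{-h(i)}=1$, $\sigma\cdot h=h\circ\sigma^{-1}$, unit $1\mapsto0$ in $\mathscr L'(1)$, full composition $\mu(h\otimes g_1\otimes\dots\otimes g_n)$ sending $m_1+\dots+m_{j-1}+t$ to $h(j)+g_j(t)$; $Lev$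 is the linear operad spanned by it. Compositions ${\underline r}\in\mathrm{Comp}_p(n)$ (nonnegative, sum $n$) are identified with partitions of $[n]$ into consecutive intervals ${\underline r}_i$; $\mathscr C_R$ is the set of $h\in\mathscr L'(n)$ constant on the parts of an ordered partition $R$. For $\rho\in\Sigma_p$: ${\underline r}^\rho=(r_{\rho^{-1}(i)})_i$, $\rho^*$ the associated block permutation. ${\underline r}\circ_1(l,m)=(l,m,r_2,\dots,r_p)$. $\gamma_k(Q)=(\bigsqcup_{t=0}^{k-1}(Q_j+tm))_j$; $R\otimes Q=(R_1,\dots,R_p,Q_1+n,\dots)$; ${\underline r}\diamond({\underline q}_i)_i=\gamma_{r_1}({\underline q}_1)\otimes\dots\otimes\gamma_{r_p}({\underline q}_p)$. A step algebra $(A,\phi)$: operations $\phi_{h,{\underline r}}:A^{\times p}\to A$ for $h\in\mathscr C_{\underline r}$ (with $\phi_{h,R}:=\phi_{\tau\cdot h,{\underline r}}$ when $\tau(R_i)={\underline r}_i$) satisfying (S1) $\phi_{\rho^*\cdot h,{\underline r}^\rho}(a_{\rho^{-1}(1)},\dots,a_{\rho^{-1}(p)})=\phi_{h,{\underline r}}(a_1,\dots,a_p)$; (S2) $\phi_{h,(0,{\underline r})}(a_0,a_1,\dots)=\phi_{h,{\underline r}}(a_1,\dots)$; (S3) $\phi_{h,{\underline r}}(\lambda a_1,\dots)=\lambda^{r_1}\phi_{h,{\underline r}}(a_1,\dots)$; (S4) $\binom{r_1}{l}\phi_{h,{\underline r}}(a_1,\dots,a_p)=\phi_{h,{\underline r}\circ_1(l,m)}(a_1,a_1,a_2,\dots,a_p)$;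 (S5) $\phi_{h,{\underline r}}(a+b,a_2,\dots)=\sum_{l+m=r_1}\phi_{h,{\underline r}\circ_1(l,m)}(a,b,a_2,\dots)$; (S6) $\phi_{1,(1)}(a)=a$; (S7) $\phi_{h,{\underline r}}((\phi_{g_i,{\underline q}_i}(a_{ij})_j)_i)=\big(\prod_i\frac{1}{r_i!}\prod_j\frac{(r_iq_{ij})!}{(q_{ij}!)^{r_i}}\big)\phi_{\mu(h\otimes g_1^{\otimes r_1}\otimes\dots\otimes g_p^{\otimes r_p}),{\underline r}\diamond({\underline q}_i)_i}((a_{ij})_{i,j})$ for ${\underline q}_i\in\mathrm{Comp}_{k_i}(m_i)$, $g_i\in\mathscr C_{{\underline q}_i}$. *)

theory Defs
  imports Complex_Main "HOL-Combinatorics.Permutations"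
begin

(* Conventions: everything is 0-based.  [n] is rendered as {0..<n}; the i-th
   entry of a composition / partition / argument tuple is (list) index i < p. *)

fun nprod :: "'a::times list \<Rightarrow> 'a" where
  "nprod [] = undefined"
| "nprod [x] = x"
| "nprod (x # y # xs) = x * nprod (y # xs)"

definition npow :: "'a::times \<Rightarrow> nat \<Rightarrow> 'a" where
  "npow a n = nprod (replicate n a)"

definition falg :: "('k::field \<Rightarrow> 'a::comm_ring \<Rightarrow> 'a) \<Rightarrow> bool" where
  "falg scale \<longleftrightarrow> vector_space scale \<and>
     (\<forall>c x y. scale c (x * y) = scale c x * y \<and> scale c (x * y) = x * scale c y)"

definition dp_algebra :: "('k::field \<Rightarrow> 'a::comm_ring \<Rightarrow> 'a) \<Rightarrow> (nat \<Rightarrow> 'a \<Rightarrow> 'a) \<Rightarrow> bool" where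
  "dp_algebra scale \<gamma> \<longleftrightarrow> falg scale \<and>
    (\<forall>n\<ge>1. \<forall>c a. \<gamma> n (scale c a) = scale (c ^ n) (\<gamma> n a)) \<and>
    (\<forall>m\<ge>1. \<forall>n\<ge>1. \<forall>a. \<gamma> m a * \<gamma> n a = scale (of_nat ((m + n) choose m)) (\<gamma> (m + n) a)) \<and>
    (\<forall>n\<ge>1. \<forall>a b. \<gamma> n (a + b) = \<gamma> n a + (\<Sum>l\<in>{1..n-1}. \<gamma> l a * \<gamma> (n - l) b) + \<gamma> n b) \<and>
    (\<forall>a. \<gamma> 1 a = a) \<and>
    (\<forall>n\<ge>1. \<forall>a b. \<gamma> n (a * b) = scale (of_nat (fact n)) (\<gamma> n a * \<gamma> n b) \<and>
                    \<gamma> n (a * b) = npow a n * \<gamma> n b \<and>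
                    \<gamma> n (a * b) = \<gamma> n a * npow b n) \<and>
    (\<forall>m\<ge>1. \<forall>n\<ge>1. \<forall>a. \<gamma> m (\<gamma> n a) =
        scale (of_nat (fact (m * n) div (fact m * fact n ^ m))) (\<gamma> (m * n) a))"

definition lev :: "nat \<Rightarrow> (nat \<Rightarrow> nat) set" where
  "lev n = {h. (\<Sum>i<n. (1/2::real) ^ h i) = 1 \<and> (\<forall>i\<ge>n. h i = 0)}"

text \<open>Compositions as lists of naturals; block i is an interval.\<close>

definition bstart :: "nat list \<Rightarrow> nat \<Rightarrow> nat" where
  "bstart r i = sum_list (take i r)"

definition block :: "nat list \<Rightarrow> nat \<Rightarrow> nat set" where
  "block r i = {bstart r i ..< bstart r (Suc i)}"

definition comp_parts :: "nat list \<Rightarrow> nat set list" where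
  "comp_parts r = map (block r) [0..<length r]"

definition blk :: "nat list \<Rightarrow> nat \<Rightarrow> nat" where
  "blk r x = (LEAST j. x < bstart r (Suc j))"

definition CR :: "nat set list \<Rightarrow> (nat \<Rightarrow> nat) set" where
  "CR R = {h \<in> lev (\<Sum>S\<leftarrow>R. card S). \<forall>S\<in>set R. \<forall>x\<in>S. \<forall>y\<in>S. h x = h y}"

definition Cc :: "nat list \<Rightarrow> (nat \<Rightarrow> nat) set" where
  "Cc r = CR (comp_parts r)"

text \<open>Full composition mu(h (x) g_1 (x) ... (x) g_n), g_j \<in> L'(m_j).\<close>

definition mu :: "(nat \<Rightarrow> nat) \<Rightarrow> (nat \<Rightarrow> nat) list \<Rightarrow> nat list \<Rightarrow> nat \<Rightarrow> nat" where
  "mu h gs ms x = (if x < sum_list ms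
      then h (blk ms x) + (gs ! blk ms x) (x - bstart ms (blk ms x)) else 0)"

definition rperm :: "(nat \<Rightarrow> nat) \<Rightarrow> nat list \<Rightarrow> nat list" where
  "rperm \<rho> r = map (\<lambda>i. r ! inv \<rho> i) [0..<length r]"

definition rho_star :: "(nat \<Rightarrow> nat) \<Rightarrow> nat list \<Rightarrow> nat \<Rightarrow> nat" where
  "rho_star \<rho> r x = (if x < sum_list r
      then bstart (rperm \<rho> r) (\<rho> (blk r x)) + (x - bstart r (blk r x)) else x)"

definition gammaP :: "nat \<Rightarrow> nat set list \<Rightarrow> nat \<Rightarrow> nat set list" where
  "gammaP k Q m = map (\<lambda>S. \<Union>t<k. (\<lambda>x. x + t * m) ` S) Q"

fun tensorL :: "(nat set list \<times> nat) list \<Rightarrow> nat set list" where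
  "tensorL [] = []"
| "tensorL ((Q, m) # rest) = Q @ map (\<lambda>S. (\<lambda>x. x + m) ` S) (tensorL rest)"

definition diamond :: "nat list \<Rightarrow> nat list list \<Rightarrow> nat set list" where
  "diamond r qs = tensorL (map (\<lambda>i. (gammaP (r ! i) (comp_parts (qs ! i)) (sum_list (qs ! i)),
                                      r ! i * sum_list (qs ! i))) [0..<length r])"

definition phiR :: "((nat \<Rightarrow> nat) \<Rightarrow> nat list \<Rightarrow> 'a list \<Rightarrow> 'a) \<Rightarrow> (nat \<Rightarrow> nat) \<Rightarrow> nat set list \<Rightarrow> 'a list \<Rightarrow> 'a" where
  "phiR phi h R as =
    (let c = map card R;
         \<tau> = (SOME \<tau>. \<tau> permutes {..<sum_list c} \<and> (\<forall>i<length R. \<tau> ` (R ! i) = block c i))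
     in phi (h \<circ> inv \<tau>) c as)"

definition step_coeff :: "nat list \<Rightarrow> nat list list \<Rightarrow> nat" where
  "step_coeff r qs = (\<Prod>i<length r.
      (\<Prod>j<length (qs ! i). fact (r ! i * (qs ! i ! j)) div (fact (qs ! i ! j) ^ (r ! i))) div fact (r ! i))"

definition step_algebra :: "('k::field \<Rightarrow> 'a::comm_ring \<Rightarrow> 'a) \<Rightarrow> ((nat \<Rightarrow> nat) \<Rightarrow> nat list \<Rightarrow> 'a list \<Rightarrow> 'a) \<Rightarrow> bool" where
  "step_algebra scale phi \<longleftrightarrow>
    \<comment> \<open>S1\<close>
    (\<forall>\<rho> h r as. \<rho> permutes {..<length r} \<and> h \<in> Cc r \<and> length as = length r \<longrightarrow>
        phi (h \<circ> inv (rho_star \<rho> r)) (rperm \<rho> r) (map (\<lambda>i. as ! inv \<rho> i) [0..<length r])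
        = phi h r as) \<and>
    \<comment> \<open>S2\<close>
    (\<forall>h r a0 as. h \<in> Cc (0 # r) \<and> length as = length r \<longrightarrow>
        phi h (0 # r) (a0 # as) = phi h r as) \<and>
    \<comment> \<open>S3\<close>
    (\<forall>h r1 rs c a1 as. h \<in> Cc (r1 # rs) \<and> length as = length rs \<longrightarrow>
        phi h (r1 # rs) (scale c a1 # as) = scale (c ^ r1) (phi h (r1 # rs) (a1 # as))) \<and>
    \<comment> \<open>S4\<close>
    (\<forall>h r1 rs l m a1 as. h \<in> Cc (r1 # rs) \<and> length as = length rs \<and> l + m = r1 \<longrightarrow>
        scale (of_nat (r1 choose l)) (phi h (r1 # rs) (a1 # as)) = phi h (l # m # rs) (a1 # a1 # as)) \<and>
    \<comment> \<open>S5\<close>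
    (\<forall>h r1 rs a b as. h \<in> Cc (r1 # rs) \<and> length as = length rs \<longrightarrow>
        phi h (r1 # rs) ((a + b) # as) = (\<Sum>l\<le>r1. phi h (l # (r1 - l) # rs) (a # b # as))) \<and>
    \<comment> \<open>S6\<close>
    (\<forall>a. phi (\<lambda>_. 0) [1] [a] = a) \<and>
    \<comment> \<open>S7\<close>
    (\<forall>h r gs qs as. h \<in> Cc r \<and> length gs = length r \<and> length qs = length r \<and> length as = length r \<and>
        (\<forall>i<length r. gs ! i \<in> Cc (qs ! i) \<and> length (as ! i) = length (qs ! i)) \<longrightarrow>
        phi h r (map (\<lambda>i. phi (gs ! i) (qs ! i) (as ! i)) [0..<length r])
        = scale (of_nat (step_coeff r qs))
            (phiR phi
               (mu h (concat (map (\<lambda>i. replicate (r ! i) (gs ! i)) [0..<length r]))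
                     (concat (map (\<lambda>i. replicate (r ! i) (sum_list (qs ! i))) [0..<length r])))
               (diamond r qs) (concat as)))"

end

theory Submission
  imports Defs
begin

lemma nprod_Cons: "ys \<noteq> [] \<Longrightarrow> nprod (x # ys) = x * nprod ys"
  by (cases ys) auto

lemma nprod_append:
  fixes xs :: "'a::ab_semigroup_mult list"
  shows "xs \<noteq> [] \<Longrightarrow> ys \<noteq> [] \<Longrightarrow> nprod (xs @ ys) = nprod xs * nprod ys"
proof (induction xs)
  case Nil then show ?case by simp
next
  case (Cons x xs)
  show ?case
  proof (cases "xs = []")
    case True then show ?thesis using Cons by (simp add: nprod_Cons)
  next
    case False then show ?thesis using Cons by (simp add: nprod_Cons mult.assoc)
  qed
qed

lemma nprod_mset:
  fixes xs :: "'a::ab_semigroup_mult list"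
  shows "mset xs = mset ys \<Longrightarrow> nprod xs = nprod ys"
proof (induction xs arbitrary: ys)
  case Nil then show ?case by simp
next
  case (Cons x xs)
  have "x \<in> set ys" using Cons.prems by (metis list.set_intros(1) set_mset_mset)
  then obtain ys1 ys2 where ys: "ys = ys1 @ x # ys2" by (meson split_list)
  have m: "mset xs = mset (ys1 @ ys2)" using Cons.prems ys by simp
  have ih: "nprod xs = nprod (ys1 @ ys2)" using Cons.IH m by blast
  show ?case
  proof (cases "xs = []")
    case True
    then have "ys1 @ ys2 = []" using m by simp
    then show ?thesis using ys True by simp
  next
    case F: False
    then have ne: "ys1 @ ys2 \<noteq> []" using m by auto
    have "nprod (x # xs) = x * nprod (ys1 @ ys2)" using F ih by (simp add: nprod_Cons)
    also have "\<dots> = nprod ys"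
    proof (cases "ys1 = []")
      case True then show ?thesis using ys ne by (simp add: nprod_Cons)
    next
      case F1: False
      show ?thesis
      proof (cases "ys2 = []")
        case True then show ?thesis using ys F1
          by (simp add: nprod_append nprod_Cons mult.commute)
      next
        case False then show ?thesis using ys F1
          by (simp add: nprod_append nprod_Cons mult.assoc mult.left_commute)
      qed
    qed
    finally show ?thesis .
  qed
qed

lemma nprod_concat:
  fixes L :: "'b \<Rightarrow> 'a::ab_semigroup_mult list"
  shows "I \<noteq> [] \<Longrightarrow> (\<forall>i\<in>set I. L i \<noteq> []) \<Longrightarrow>
    nprod (concat (map L I)) = nprod (map (\<lambda>i. nprod (L i)) I)"
proof (induction I)
  case Nil then show ?case by simp
next
  case (Cons i I)
  show ?case
  proof (cases "I = []")
    case True then show ?thesis by simp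
  next
    case False
    then have "concat (map L I) \<noteq> []" using Cons.prems by (cases I) auto
    then show ?thesis using Cons False by (simp add: nprod_append nprod_Cons)
  qed
qed


section \<open>Combinatorial divisibility\<close>

lemma fact_mult_dvd: "q \<noteq> 0 \<Longrightarrow> fact r * fact q ^ r dvd (fact (r * q) :: nat)"
proof (induction r)
  case 0 then show ?case by simp
next
  case (Suc r)
  have le: "q \<le> Suc r * q" by simp
  have "fact (Suc r * q) = fact q * fact (r * q) * (Suc r * q choose q)"
    using binomial_fact_lemma[OF le] by (simp add: algebra_simps)
  moreover have "Suc r dvd (Suc r * q choose q)"
  proof -
    have False: "q \<noteq> 0" by fact
    have "q * (Suc r * q choose q) = Suc r * q * ((Suc r * q - 1) choose (q - 1))"
      using times_binomial_minus1_eq[of q "Suc r * q"] False by simp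
    then have "q * (Suc r * q choose q) = q * (Suc r * ((Suc r * q - 1) choose (q - 1)))"
      by (simp only: mult.assoc mult.left_commute)
    then have "(Suc r * q choose q) = Suc r * ((Suc r * q - 1) choose (q - 1))"
      using False by (metis mult_left_cancel)
    then show ?thesis by (metis dvd_triv_left)
  qed
  ultimately show ?case
  proof -
    assume e: "fact (Suc r * q) = fact q * fact (r * q) * (Suc r * q choose q)"
      and d: "Suc r dvd (Suc r * q choose q)"
    have "fact (Suc r) * fact q ^ Suc r = fact q * ((fact r * fact q ^ r) * Suc r)"
      by (simp add: algebra_simps)
    also have "\<dots> dvd fact q * (fact (r * q) * (Suc r * q choose q))"
      using Suc.IH Suc.prems d by (intro mult_dvd_mono) auto
    finally show ?thesis using e by (simp add: mult.assoc)
  qed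
qed

section \<open>Combinatorics of compositions\<close>

lemma bstart_Suc: "i < length r \<Longrightarrow> bstart r (Suc i) = bstart r i + r ! i"
  by (simp add: bstart_def take_Suc_conv_app_nth)

lemma card_block: "i < length r \<Longrightarrow> card (block r i) = r ! i"
  by (simp add: block_def bstart_Suc)

lemma bstart_le: "bstart r i \<le> sum_list r"
  unfolding bstart_def by (metis append_take_drop_id le_add1 sum_list_append)

lemma block_sub: "block r i \<subseteq> {..<sum_list r}"
proof -
  have "bstart r (Suc i) \<le> sum_list r" by (rule bstart_le)
  then show ?thesis by (auto simp: block_def)
qed

lemma map_card_comp_parts: "map card (comp_parts r) = r"
  by (rule nth_equalityI) (auto simp: comp_parts_def card_block)

lemma Cc_pos: "h \<in> Cc r \<Longrightarrow> sum_list r \<noteq> 0"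
proof
  assume h: "h \<in> Cc r" and z: "sum_list r = 0"
  have "sum_list (map card (comp_parts r)) = 0" using z by (simp add: map_card_comp_parts)
  moreover have "h \<in> lev (sum_list (map card (comp_parts r)))" using h unfolding Cc_def CR_def by blast
  ultimately have "h \<in> lev 0" by metis
  then show False by (simp add: lev_def)
qed

lemma card_translates:
  assumes "S \<subseteq> {..<m}" "finite S"
  shows "card (\<Union>t<k. (\<lambda>x. x + t * m) ` S) = k * card S"
proof (cases "S = {}")
  case True then show ?thesis by simp
next
  case False
  then have mpos: "m > 0" using assms(1) by auto
  have eq: "(\<Union>t<k. (\<lambda>x. x + t * m) ` S) = (\<lambda>(t, x). x + t * m) ` ({..<k} \<times> S)" by auto
  have "inj_on (\<lambda>(t, x). x + t * m) ({..<k} \<times> S)"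
  proof (rule inj_onI, clarify)
    fix t x t' x'
    assume "x \<in> S" "x' \<in> S" "x + t * m = x' + t' * m"
    moreover have "x < m" "x' < m" using assms(1) \<open>x \<in> S\<close> \<open>x' \<in> S\<close> by auto
    moreover have "(x + t * m) div m = t" "(x' + t' * m) div m = t'"
      using \<open>x < m\<close> \<open>x' < m\<close> mpos by simp_all
    moreover have "(x + t * m) mod m = x" "(x' + t' * m) mod m = x'"
      using \<open>x < m\<close> \<open>x' < m\<close> mpos by simp_all
    ultimately show "t = t' \<and> x = x'" by metis
  qed
  then show ?thesis unfolding eq using assms(2) by (simp add: card_image card_cartesian_product)
qed

lemma map_card_gammaP: "map card (gammaP k (comp_parts q) (sum_list q)) = map ((*) k) q"
proof (rule nth_equalityI)
  fix j assume "j < length (map card (gammaP k (comp_parts q) (sum_list q)))"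
  then have j: "j < length q" by (simp add: gammaP_def comp_parts_def)
  have "card (\<Union>t<k. (\<lambda>x. x + t * sum_list q) ` block q j) = k * card (block q j)"
    by (rule card_translates[OF block_sub]) (simp add: block_def)
  then show "map card (gammaP k (comp_parts q) (sum_list q)) ! j = map ((*) k) q ! j"
    using j by (simp add: gammaP_def comp_parts_def card_block)
qed (simp add: gammaP_def comp_parts_def)

lemma map_card_tensorL: "map card (tensorL L) = concat (map (\<lambda>(Q, m). map card Q) L)"
proof (induction L rule: tensorL.induct)
  case 1 then show ?case by simp
next
  case (2 Q m rest)
  have "map card (map (\<lambda>S. (\<lambda>x. x + m) ` S) (tensorL rest)) = map card (tensorL rest)"
    by (simp add: card_image inj_on_def)
  then show ?case using 2 by simp
qed

lemma map_card_diamond: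
  "map card (diamond r qs) = concat (map (\<lambda>i. map ((*) (r ! i)) (qs ! i)) [0..<length r])"
  unfolding diamond_def map_card_tensorL by (simp add: o_def map_card_gammaP)

definition dd :: "nat \<Rightarrow> nat \<Rightarrow> nat" where
  "dd r q = fact (r * q) div (fact r * fact q ^ r)"

definition cK :: "nat \<Rightarrow> (nat \<times> 'b) list \<Rightarrow> nat" where
  "cK r K = fact r ^ (length K - 1) * prod_list (map (\<lambda>(q, a). dd r q) K)"

lemma fact_dd: "q \<noteq> 0 \<Longrightarrow> fact (r * q) div fact q ^ r = fact r * dd r q"
proof -
  assume q: "q \<noteq> 0"
  obtain c :: nat where c: "fact (r * q) = fact r * fact q ^ r * c" using fact_mult_dvd[OF q, of r] by (elim dvdE) blast
  have "fact q ^ r \<noteq> (0::nat)" by simp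
  then show ?thesis using c unfolding dd_def by (simp add: mult.assoc mult.left_commute)
qed

lemma prod_list_filter1:
  "(\<And>x. \<not> P x \<Longrightarrow> f x = (1::nat)) \<Longrightarrow> prod_list (map f xs) = prod_list (map f (filter P xs))"
  by (induction xs) auto

lemma prod_list_fact_pow:
  "prod_list (map (\<lambda>(x, y). fact r * dd r x) K) = fact r ^ length K * prod_list (map (\<lambda>(x, y). dd r x) K)"
  by (induction K) (auto simp: algebra_simps)

lemma coef_eq:
  assumes r: "r \<noteq> 0" and len: "length q = length a"
    and K: "K = filter (\<lambda>(x, y). x \<noteq> 0) (zip q a)" and Kne: "K \<noteq> []"
  shows "(\<Prod>j<length q. fact (r * (q ! j)) div (fact (q ! j) ^ r)) div fact r = cK r K"
proof -
  define f where "f x = fact (r * x) div (fact x ^ r :: nat)" for x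
  have "(\<Prod>j<length q. fact (r * (q ! j)) div (fact (q ! j) ^ r)) = prod_list (map f q)"
    unfolding f_def by (simp add: prod.list_conv_set_nth lessThan_atLeast0)
  also have "\<dots> = prod_list (map f (filter (\<lambda>x. x \<noteq> 0) q))"
    by (rule prod_list_filter1) (simp add: f_def)
  also have "filter (\<lambda>x. x \<noteq> 0) q = map fst K"
  proof -
    have "map fst K = filter (\<lambda>x. x \<noteq> 0) (map fst (zip q a))"
      unfolding K by (induction q a rule: list_induct2') auto
    then show ?thesis using len by simp
  qed
  also have "prod_list (map f (map fst K)) = prod_list (map (\<lambda>(x, y). fact r * dd r x) K)"
  proof -
    have "\<forall>p\<in>set K. fst p \<noteq> 0" unfolding K by auto
    then show ?thesis unfolding f_def
      by (induction K) (auto simp: fact_dd split: prod.splits)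
  qed
  also have "\<dots> = fact r ^ length K * prod_list (map (\<lambda>(x, y). dd r x) K)"
    by (rule prod_list_fact_pow)
  finally have e: "(\<Prod>j<length q. fact (r * (q ! j)) div (fact (q ! j) ^ r))
      = fact r * (fact r ^ (length K - 1) * prod_list (map (\<lambda>(x, y). dd r x) K))"
    using Kne by (cases K) auto
  show ?thesis unfolding e cK_def by simp
qed

lemma zip_concat_map:
  "(\<forall>i\<in>set I. length (f i) = length (g i)) \<Longrightarrow>
   zip (concat (map f I)) (concat (map g I)) = concat (map (\<lambda>i. zip (f i) (g i)) I)"
  by (induction I) auto

lemma concat_if_filter:
  "concat (map (\<lambda>i. if P i then f i else []) xs) = concat (map f (filter P xs))"
  by (induction xs) auto

lemma sum_list_nz: "sum_list (xs :: nat list) \<noteq> 0 \<Longrightarrow> \<exists>j<length xs. xs ! j \<noteq> 0"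
  by (metis in_set_conv_nth sum_list_eq_0_iff)

section \<open>The divided power locale\<close>

locale dpa =
  fixes scale :: "'k::field \<Rightarrow> 'a::comm_ring \<Rightarrow> 'a" and \<gamma> :: "nat \<Rightarrow> 'a \<Rightarrow> 'a"
  assumes dp: "dp_algebra scale \<gamma>"
begin

lemma vs: "vector_space scale" using dp unfolding dp_algebra_def falg_def by blast

lemma sc_add: "scale c (x + y) = scale c x + scale c y"
  using vs unfolding vector_space_def by blast
lemma sc_scale: "scale c (scale d x) = scale (c * d) x"
  using vs unfolding vector_space_def by blast
lemma sc_one[simp]: "scale 1 x = x"
  using vs unfolding vector_space_def by blast
lemma sc_mult1: "scale c (x * y) = scale c x * y"
  using dp unfolding dp_algebra_def falg_def by blast
lemma sc_mult2: "scale c (x * y) = x * scale c y"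
  using dp unfolding dp_algebra_def falg_def by blast
lemma sc_mult: "scale c x * scale d y = scale (c * d) (x * y)"
  by (metis sc_mult1 sc_mult2 sc_scale)

lemma C1: "n \<ge> 1 \<Longrightarrow> \<gamma> n (scale c a) = scale (c ^ n) (\<gamma> n a)"
  using dp unfolding dp_algebra_def by blast
lemma C2: "m \<ge> 1 \<Longrightarrow> n \<ge> 1 \<Longrightarrow> \<gamma> m a * \<gamma> n a = scale (of_nat ((m + n) choose m)) (\<gamma> (m + n) a)"
  using dp unfolding dp_algebra_def by blast
lemma C3: "n \<ge> 1 \<Longrightarrow> \<gamma> n (a + b) = \<gamma> n a + (\<Sum>l\<in>{1..n-1}. \<gamma> l a * \<gamma> (n - l) b) + \<gamma> n b"
  using dp unfolding dp_algebra_def by blast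
lemma C4: "\<gamma> 1 a = a"
  using dp unfolding dp_algebra_def by blast
lemma C5: "n \<ge> 1 \<Longrightarrow> \<gamma> n (a * b) = scale (of_nat (fact n)) (\<gamma> n a * \<gamma> n b)"
  using dp unfolding dp_algebra_def by blast
lemma C6: "m \<ge> 1 \<Longrightarrow> n \<ge> 1 \<Longrightarrow> \<gamma> m (\<gamma> n a) =
        scale (of_nat (fact (m * n) div (fact m * fact n ^ m))) (\<gamma> (m * n) a)"
  using dp unfolding dp_algebra_def by blast


lemma nprod_scale:
  "I \<noteq> [] \<Longrightarrow> nprod (map (\<lambda>i. scale (of_nat (c i)) (x i)) I)
     = scale (of_nat (prod_list (map c I))) (nprod (map x I))"
proof (induction I)
  case Nil then show ?case by simp
next
  case (Cons i I)
  show ?case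
  proof (cases "I = []")
    case True then show ?thesis by simp
  next
    case False then show ?thesis using Cons by (simp add: nprod_Cons sc_mult)
  qed
qed


definition Ph :: "(nat \<Rightarrow> nat) \<Rightarrow> nat list \<Rightarrow> 'a list \<Rightarrow> 'a" where
  "Ph h r as = nprod (map (\<lambda>i. \<gamma> (r ! i) (as ! i)) (filter (\<lambda>i. r ! i \<noteq> 0) [0..<length r]))"

definition Gl :: "(nat \<times> 'a) list \<Rightarrow> 'a list" where
  "Gl xs = map (\<lambda>(x, a). \<gamma> x a) (filter (\<lambda>(x, a). x \<noteq> 0) xs)"

lemma Gl_simps[simp]: "Gl [] = []" "Gl ((0, a) # xs) = Gl xs"
  "x \<noteq> 0 \<Longrightarrow> Gl ((x, a) # xs) = \<gamma> x a # Gl xs"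
  by (auto simp: Gl_def)

lemma zip_nth_map: "length as = length r \<Longrightarrow> zip r as = map (\<lambda>i. (r ! i, as ! i)) [0..<length r]"
  by (rule nth_equalityI) auto

lemma Ph_zip: "length as = length r \<Longrightarrow> Ph h r as = nprod (Gl (zip r as))"
  unfolding Ph_def Gl_def by (simp add: zip_nth_map filter_map o_def)

lemma Gl_mset: "mset xs = mset ys \<Longrightarrow> nprod (Gl xs) = nprod (Gl ys)"
  unfolding Gl_def by (rule nprod_mset) (simp add: mset_filter)

lemma Gl_append: "Gl (xs @ ys) = Gl xs @ Gl ys" by (simp add: Gl_def)

lemma nprod_sc_Cons: "nprod (scale c x # R) = scale c (nprod (x # R))"
  by (cases "R = []") (auto simp: sc_mult1 nprod_Cons)
lemma nprod_mult_Cons: fixes x y :: 'a shows "nprod ((x * y) # R) = nprod (x # y # R)"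
  by (cases "R = []") (auto simp: mult.assoc nprod_Cons)
lemma nprod_add_Cons: fixes x y :: 'a shows "nprod ((x + y) # R) = nprod (x # R) + nprod (y # R)"
  by (cases "R = []") (auto simp: distrib_right nprod_Cons)
lemma nprod_sum_Cons: fixes f :: "'b \<Rightarrow> 'a" shows "nprod (sum f A # R) = (\<Sum>l\<in>A. nprod (f l # R))"
  by (cases "R = []") (auto simp: sum_distrib_right nprod_Cons)

lemma S2: "length as = length r \<Longrightarrow> Ph h (0 # r) (a0 # as) = Ph h r as"
  by (simp add: Ph_zip)

lemma S3: "length as = length rs \<Longrightarrow>
    Ph h (r1 # rs) (scale c a1 # as) = scale (c ^ r1) (Ph h (r1 # rs) (a1 # as))"
proof (cases "r1 = 0")
  case True then show ?thesis if "length as = length rs" using that by (simp add: Ph_zip)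
next
  case False
  then show ?thesis if "length as = length rs" using that
    by (simp add: Ph_zip C1 nprod_sc_Cons)
qed

lemma S4: "length as = length rs \<Longrightarrow> l + m = r1 \<Longrightarrow>
    scale (of_nat (r1 choose l)) (Ph h (r1 # rs) (a1 # as)) = Ph h (l # m # rs) (a1 # a1 # as)"
proof -
  assume len: "length as = length rs" and lm: "l + m = r1"
  show ?thesis
  proof (cases "l = 0")
    case True then show ?thesis using len lm by (simp add: Ph_zip)
  next
    case l: False
    show ?thesis
    proof (cases "m = 0")
      case True then show ?thesis using len lm l by (simp add: Ph_zip)
    next
      case False
      have "Ph h (l # m # rs) (a1 # a1 # as) = nprod (\<gamma> l a1 # \<gamma> m a1 # Gl (zip rs as))"
        using len l False by (simp add: Ph_zip)
      also have "\<dots> = nprod ((\<gamma> l a1 * \<gamma> m a1) # Gl (zip rs as))"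
        by (simp only: nprod_mult_Cons)
      also have "\<dots> = scale (of_nat (r1 choose l)) (nprod (\<gamma> r1 a1 # Gl (zip rs as)))"
        using C2[of l m a1] l False lm by (simp add: nprod_sc_Cons)
      also have "\<dots> = scale (of_nat (r1 choose l)) (Ph h (r1 # rs) (a1 # as))"
        using len l lm by (simp add: Ph_zip)
      finally show ?thesis by simp
    qed
  qed
qed

lemma S5: "length as = length rs \<Longrightarrow>
    Ph h (r1 # rs) ((a + b) # as) = (\<Sum>l\<le>r1. Ph h (l # (r1 - l) # rs) (a # b # as))"
proof -
  assume len: "length as = length rs"
  define R where "R = Gl (zip rs as)"
  show ?thesis
  proof (cases r1)
    case 0 then show ?thesis using len by (simp add: Ph_zip)
  next
    case (Suc m)
    have split: "(\<Sum>l\<le>Suc m. f l) = f 0 + (\<Sum>l\<in>{1..m}. f l) + f (Suc m)" for f :: "nat \<Rightarrow> 'a"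
    proof -
      have "{..m} = insert 0 {1..m}" by auto
      then have "(\<Sum>l\<le>m. f l) = f 0 + (\<Sum>l\<in>{1..m}. f l)" by simp
      then show ?thesis by simp
    qed
    have mid: "(\<Sum>l\<in>{1..m}. Ph h (l # (Suc m - l) # rs) (a # b # as))
        = (\<Sum>l\<in>{1..m}. nprod ((\<gamma> l a * \<gamma> (Suc m - l) b) # R))"
      by (rule sum.cong) (auto simp: Ph_zip len R_def nprod_mult_Cons)
    have "Ph h (r1 # rs) ((a + b) # as) = nprod (\<gamma> (Suc m) (a + b) # R)"
      using Suc len by (simp add: Ph_zip R_def)
    also have "\<dots> = nprod (\<gamma> (Suc m) a # R) + (\<Sum>l\<in>{1..m}. nprod ((\<gamma> l a * \<gamma> (Suc m - l) b) # R))
        + nprod (\<gamma> (Suc m) b # R)"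
      by (simp add: C3 nprod_add_Cons nprod_sum_Cons)
    also have "\<dots> = (\<Sum>l\<le>r1. Ph h (l # (r1 - l) # rs) (a # b # as))"
      unfolding Suc split mid using len by (simp add: Ph_zip R_def)
    finally show ?thesis .
  qed
qed

lemma S6: "Ph (\<lambda>_. 0) [1] [a] = a"
  using C4[of a] by (simp add: Ph_def)


lemma perm_mset: assumes "\<sigma> permutes {..<n}" shows "mset (map \<sigma> [0..<n]) = mset [0..<n]"
proof -
  have "mset (map \<sigma> [0..<n]) = image_mset \<sigma> (mset_set {..<n})"
    by (simp add: mset_upt lessThan_atLeast0)
  also have "\<dots> = mset_set {..<n}" by (rule permutes_image_mset[OF assms])
  finally show ?thesis by (simp add: mset_upt lessThan_atLeast0)
qed

lemma S1: assumes "\<rho> permutes {..<length r}" "length as = length r"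
  shows "Ph h' (rperm \<rho> r) (map (\<lambda>i. as ! inv \<rho> i) [0..<length r]) = Ph h r as"
proof -
  let ?n = "length r"
  have ip: "inv \<rho> permutes {..<?n}" using assms(1) by (rule permutes_inv)
  have "zip (rperm \<rho> r) (map (\<lambda>i. as ! inv \<rho> i) [0..<?n])
      = map (\<lambda>i. (r ! i, as ! i)) (map (inv \<rho>) [0..<?n])"
    by (rule nth_equalityI) (auto simp: rperm_def)
  moreover have "mset (map (\<lambda>i. (r ! i, as ! i)) (map (inv \<rho>) [0..<?n])) = mset (zip r as)"
    using perm_mset[OF ip] assms(2) by (simp only: mset_map zip_nth_map)
  ultimately have "nprod (Gl (zip (rperm \<rho> r) (map (\<lambda>i. as ! inv \<rho> i) [0..<?n])))
      = nprod (Gl (zip r as))" by (metis Gl_mset)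
  moreover have "length (rperm \<rho> r) = ?n" by (simp add: rperm_def)
  ultimately show ?thesis using assms(2) by (simp add: Ph_zip)
qed


lemma key_gamma:
  assumes "r \<noteq> 0" "K \<noteq> []" "\<forall>p\<in>set K. fst p \<noteq> 0"
  shows "\<gamma> r (nprod (map (\<lambda>(q, a). \<gamma> q a) K))
       = scale (of_nat (cK r K)) (nprod (map (\<lambda>(q, a). \<gamma> (r * q) a) K))"
  using assms(2,3)
proof (induction K)
  case Nil then show ?case by simp
next
  case (Cons p K)
  obtain q a where p: "p = (q, a)" by (cases p)
  have q: "q \<noteq> 0" using Cons.prems p by auto
  have g: "\<gamma> r (\<gamma> q a) = scale (of_nat (dd r q)) (\<gamma> (r * q) a)"
    using C6[of r q a] assms(1) q by (simp add: dd_def)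
  show ?case
  proof (cases "K = []")
    case True then show ?thesis using g p by (simp add: cK_def)
  next
    case False
    have ih: "\<gamma> r (nprod (map (\<lambda>(q, a). \<gamma> q a) K))
       = scale (of_nat (cK r K)) (nprod (map (\<lambda>(q, a). \<gamma> (r * q) a) K))"
      using Cons False by auto
    have cK: "cK r (p # K) = fact r * (dd r q * cK r K)"
      using False p by (cases K) (auto simp: cK_def algebra_simps)
    have "\<gamma> r (nprod (map (\<lambda>(q, a). \<gamma> q a) (p # K)))
        = \<gamma> r (\<gamma> q a * nprod (map (\<lambda>(q, a). \<gamma> q a) K))"
      using False p by (simp add: nprod_Cons)
    also have "\<dots> = scale (of_nat (fact r)) (\<gamma> r (\<gamma> q a) * \<gamma> r (nprod (map (\<lambda>(q, a). \<gamma> q a) K)))"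
      using C5 assms(1) by simp
    also have "\<dots> = scale (of_nat (cK r (p # K)))
        (\<gamma> (r * q) a * nprod (map (\<lambda>(q, a). \<gamma> (r * q) a) K))"
      unfolding g ih sc_mult cK sc_scale by (simp add: mult.assoc)
    also have "\<dots> = scale (of_nat (cK r (p # K))) (nprod (map (\<lambda>(q, a). \<gamma> (r * q) a) (p # K)))"
      using False p by (simp add: nprod_Cons)
    finally show ?thesis .
  qed
qed


lemma Ph_h: "Ph h r as = Ph h' r as" by (simp add: Ph_def)

lemma phiR_Ph: "phiR Ph H D xs = Ph H (map card D) xs"
  unfolding phiR_def Let_def by (rule Ph_h)

lemma Gl_concat: "Gl (concat xss) = concat (map Gl xss)"
  by (induction xss) (auto simp: Gl_append)

lemma Gl_zip_mult:
  "Gl (zip (map ((*) k) q) a) = (if k = 0 then [] else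
      map (\<lambda>(x, y). \<gamma> (k * x) y) (filter (\<lambda>(x, y). x \<noteq> 0) (zip q a)))"
  by (induction q a rule: list_induct2') auto

lemma S7:
  assumes hC: "h \<in> Cc r" and lg: "length gs = length r" and lq: "length qs = length r"
    and la: "length as = length r"
    and ii: "\<forall>i<length r. gs ! i \<in> Cc (qs ! i) \<and> length (as ! i) = length (qs ! i)"
  shows "Ph h r (map (\<lambda>i. Ph (gs ! i) (qs ! i) (as ! i)) [0..<length r])
       = scale (of_nat (step_coeff r qs)) (phiR Ph H (diamond r qs) (concat as))"
proof -
  define p where "p = length r"
  define I where "I = filter (\<lambda>i. r ! i \<noteq> 0) [0..<p]"
  define K where "K i = filter (\<lambda>(x, y). x \<noteq> 0) (zip (qs ! i) (as ! i))" for i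
  define M where "M i = map (\<lambda>(x, y). \<gamma> (r ! i * x) y) (K i)" for i
  define c where "c i = cK (r ! i) (K i)" for i
  have Ine: "I \<noteq> []"
  proof -
    obtain i where "i < length r" "r ! i \<noteq> 0" using sum_list_nz Cc_pos[OF hC] by blast
    then show ?thesis unfolding I_def p_def by (auto simp: filter_empty_conv)
  qed
  have Kne: "K i \<noteq> []" if "i < p" for i
  proof -
    have "sum_list (qs ! i) \<noteq> 0" using ii that Cc_pos unfolding p_def by blast
    then obtain j where j: "j < length (qs ! i)" "qs ! i ! j \<noteq> 0" using sum_list_nz by blast
    then have "(qs ! i ! j, as ! i ! j) \<in> set (zip (qs ! i) (as ! i))"
      using ii that unfolding p_def by (auto simp: in_set_conv_nth intro!: exI[of _ j])
    then show ?thesis using j unfolding K_def by (auto simp: filter_empty_conv)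
  qed
  have Iset: "i \<in> set I \<Longrightarrow> i < p \<and> r ! i \<noteq> 0" for i unfolding I_def by auto
  have inner: "Ph (gs ! i) (qs ! i) (as ! i) = nprod (map (\<lambda>(q, a). \<gamma> q a) (K i))" if "i < p" for i
    using ii that unfolding p_def K_def by (simp add: Ph_zip Gl_def)
  have "Ph h r (map (\<lambda>i. Ph (gs ! i) (qs ! i) (as ! i)) [0..<length r])
      = nprod (map (\<lambda>i. \<gamma> (r ! i) (Ph (gs ! i) (qs ! i) (as ! i))) I)"
  proof -
    have "\<And>i. i \<in> set I \<Longrightarrow> map (\<lambda>i. Ph (gs ! i) (qs ! i) (as ! i)) [0..<length r] ! i
        = Ph (gs ! i) (qs ! i) (as ! i)"
      using Iset unfolding p_def by simp
    then have "map (\<lambda>i. \<gamma> (r ! i) (map (\<lambda>i. Ph (gs ! i) (qs ! i) (as ! i)) [0..<length r] ! i)) I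
        = map (\<lambda>i. \<gamma> (r ! i) (Ph (gs ! i) (qs ! i) (as ! i))) I"
      by (intro map_cong) auto
    moreover have "Ph h r (map (\<lambda>i. Ph (gs ! i) (qs ! i) (as ! i)) [0..<length r])
      = nprod (map (\<lambda>i. \<gamma> (r ! i) (map (\<lambda>i. Ph (gs ! i) (qs ! i) (as ! i)) [0..<length r] ! i)) I)"
      by (simp only: Ph_def length_map length_upt diff_zero I_def p_def)
    ultimately show ?thesis by (simp only:)
  qed
  also have "\<dots> = nprod (map (\<lambda>i. scale (of_nat (c i)) (nprod (M i))) I)"
  proof -
    have "\<gamma> (r ! i) (Ph (gs ! i) (qs ! i) (as ! i)) = scale (of_nat (c i)) (nprod (M i))"
      if "i \<in> set I" for i
    proof -
      have "\<forall>p\<in>set (K i). fst p \<noteq> 0" unfolding K_def by auto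
      then show ?thesis using Iset[OF that] inner Kne key_gamma unfolding M_def c_def by auto
    qed
    then show ?thesis by (simp cong: map_cong)
  qed
  also have "\<dots> = scale (of_nat (prod_list (map c I))) (nprod (map (\<lambda>i. nprod (M i)) I))"
    by (rule nprod_scale[OF Ine])
  also have "nprod (map (\<lambda>i. nprod (M i)) I) = nprod (concat (map M I))"
    using Ine Kne Iset unfolding M_def by (subst nprod_concat) auto
  finally have L: "Ph h r (map (\<lambda>i. Ph (gs ! i) (qs ! i) (as ! i)) [0..<length r])
      = scale (of_nat (prod_list (map c I))) (nprod (concat (map M I)))" .
  have coef: "step_coeff r qs = prod_list (map c I)"
  proof -
    define e :: "nat \<Rightarrow> nat" where "e i = (\<Prod>j<length (qs ! i). fact (r ! i * (qs ! i ! j)) div (fact (qs ! i ! j) ^ (r ! i))) div fact (r ! i)" for i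
    have "step_coeff r qs = prod_list (map e [0..<p])"
      unfolding step_coeff_def e_def p_def by (simp add: prod.list_conv_set_nth lessThan_atLeast0)
    also have "\<dots> = prod_list (map e I)"
      unfolding I_def by (rule prod_list_filter1) (simp add: e_def)
    also have "map e I = map c I"
    proof (rule map_cong[OF refl])
      fix i assume "i \<in> set I"
      then have "i < p" "r ! i \<noteq> 0" using Iset by auto
      then show "e i = c i" unfolding e_def c_def
        using coef_eq[of "r ! i" "qs ! i" "as ! i" "K i"] ii Kne K_def p_def by auto
    qed
    finally show ?thesis .
  qed
  have lens: "\<forall>i\<in>set [0..<p]. length (map ((*) (r ! i)) (qs ! i)) = length (as ! i)"
    using ii unfolding p_def by auto
  have cas: "concat as = concat (map (\<lambda>i. as ! i) [0..<p])"
    using map_nth[of as] la p_def by simp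
  have "phiR Ph H (diamond r qs) (concat as) = Ph H (map card (diamond r qs)) (concat as)"
    by (rule phiR_Ph)
  also have "\<dots> = nprod (Gl (zip (map card (diamond r qs)) (concat as)))"
  proof (rule Ph_zip)
    have l1: "length (map card (diamond r qs)) = length (concat (map (\<lambda>i. map ((*) (r ! i)) (qs ! i)) [0..<p]))"
      unfolding map_card_diamond p_def ..
    have "map (\<lambda>x. length (as ! x)) [0..<p] = map (\<lambda>x. length (qs ! x)) [0..<p]"
      using lens by (intro map_cong) auto
    then show "length (concat as) = length (map card (diamond r qs))"
      unfolding l1 cas by (simp only: length_concat map_map o_def length_map)
  qed
  also have "\<dots> = nprod (concat (map M I))"
  proof -
    have E2: "map Gl (map (\<lambda>i. zip (map ((*) (r ! i)) (qs ! i)) (as ! i)) [0..<p])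
        = map (\<lambda>i. if r ! i \<noteq> 0 then M i else []) [0..<p]"
      by (simp add: Gl_zip_mult M_def K_def)
    show ?thesis
      unfolding map_card_diamond cas p_def[symmetric] zip_concat_map[OF lens] Gl_concat E2
        concat_if_filter I_def[symmetric] ..
  qed
  finally show ?thesis unfolding L coef by simp
qed


lemma step: "step_algebra scale Ph"
  unfolding step_algebra_def
proof (intro conjI allI impI)
  show "Ph (h \<circ> inv (rho_star \<rho> r)) (rperm \<rho> r) (map (\<lambda>i. as ! inv \<rho> i) [0..<length r]) = Ph h r as"
    if "\<rho> permutes {..<length r} \<and> h \<in> Cc r \<and> length as = length r" for \<rho> h r as
    using S1 that by blast
  show "Ph h (0 # r) (a0 # as) = Ph h r as" if "h \<in> Cc (0 # r) \<and> length as = length r" for h r a0 as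
    using S2 that by blast
  show "Ph h (r1 # rs) (scale c a1 # as) = scale (c ^ r1) (Ph h (r1 # rs) (a1 # as))"
    if "h \<in> Cc (r1 # rs) \<and> length as = length rs" for h r1 rs c a1 as
    using S3 that by blast
  show "scale (of_nat (r1 choose l)) (Ph h (r1 # rs) (a1 # as)) = Ph h (l # m # rs) (a1 # a1 # as)"
    if "h \<in> Cc (r1 # rs) \<and> length as = length rs \<and> l + m = r1" for h r1 rs l m a1 as
    using S4 that by blast
  show "Ph h (r1 # rs) ((a + b) # as) = (\<Sum>l\<le>r1. Ph h (l # (r1 - l) # rs) (a # b # as))"
    if "h \<in> Cc (r1 # rs) \<and> length as = length rs" for h r1 rs a b as
    using S5 that by blast
  show "Ph (\<lambda>_. 0) [1] [a] = a" for a by (rule S6)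
  show "Ph h r (map (\<lambda>i. Ph (gs ! i) (qs ! i) (as ! i)) [0..<length r]) =
        scale (of_nat (step_coeff r qs))
         (phiR Ph
           (mu h (concat (map (\<lambda>i. replicate (r ! i) (gs ! i)) [0..<length r]))
             (concat (map (\<lambda>i. replicate (r ! i) (sum_list (qs ! i))) [0..<length r])))
           (diamond r qs) (concat as))"
    if "h \<in> Cc r \<and> length gs = length r \<and> length qs = length r \<and> length as = length r \<and>
        (\<forall>i<length r. gs ! i \<in> Cc (qs ! i) \<and> length (as ! i) = length (qs ! i))" for h r gs qs as
    using S7 that by blast
qed

end

theorem proposition6p2:
  fixes scale :: "'k::field \<Rightarrow> 'a::comm_ring \<Rightarrow> 'a" and \<gamma> :: "nat \<Rightarrow> 'a \<Rightarrow> 'a"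
  assumes "dp_algebra scale \<gamma>"
  shows "step_algebra scale
           (\<lambda>h r as. nprod (map (\<lambda>i. \<gamma> (r ! i) (as ! i)) (filter (\<lambda>i. r ! i \<noteq> 0) [0..<length r])))"
proof -
  interpret dpa scale \<gamma> by (rule dpa.intro) (fact assms)
  have "(\<lambda>h r as. nprod (map (\<lambda>i. \<gamma> (r ! i) (as ! i)) (filter (\<lambda>i. r ! i \<noteq> 0) [0..<length r]))) = Ph"
    by (intro ext) (simp add: Ph_def)
  then show ?thesis using step by simp
qed

end
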